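(* Let $R=K[x_1,\ldots,x_n]$ be a polynomial ring over a field $K$, $I\subset R$ a monomial ideal, $\ell$ a positive integer, $v$ a square-free monomial of $R$ with $v\in I^\ell$, and $\mathfrak{p}$ a monomial prime ideal of $R$ such that, for some positive integer $s$, $\mathfrak{p}\setminus x_i\notin\mathrm{Ass}(R/(I\setminus x_i)^s)$ for every variable $x_i$ dividing $v$. If $\mathfrak{p}\in\mathrm{Ass}(R/I^s)$, then $s>\ell$.
   Context: For a monomial ideal $I\subset R$, $\mathcal{G}(I)$ denotes its unique minimal set of monomial generators. For a variable $x_i$, the deletion $I\setminus x_i$ is the monomial ideal of $R$ generated by those $u\in\mathcal{G}(I)$ with $x_i\nmid u$. For a monomial prime ideal $\mathfrak{p}$ (generated by variables), $\mathfrak{p}\setminus x_i$ is the ideal generated by the variables of $\mathfrak{p}$ other than $x_i$. *)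

theory Defs
  imports Main "HOL-Library.Poly_Mapping"
begin

text \<open>The polynomial ring K[x_v : v in 'v] over a field 'k, with a finite type 'v of
  variables, is modelled as the type of finitely supported functions from exponent
  vectors ('v =>0 nat) to coefficients in 'k (library type poly_mapping, a comm_ring_1).\<close>

type_synonym ('v, 'k) mpoly = "('v \<Rightarrow>\<^sub>0 nat) \<Rightarrow>\<^sub>0 'k"

definition is_ideal :: "('v, 'k::field) mpoly set \<Rightarrow> bool" where
  "is_ideal I \<longleftrightarrow> 0 \<in> I \<and> (\<forall>a\<in>I. \<forall>b\<in>I. a + b \<in> I) \<and> (\<forall>r. \<forall>a\<in>I. r * a \<in> I)"

definition ideal_gen :: "('v, 'k::field) mpoly set \<Rightarrow> ('v, 'k) mpoly set" where
  "ideal_gen S = \<Inter> {I. is_ideal I \<and> S \<subseteq> I}"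

definition is_prime_ideal :: "('v, 'k::field) mpoly set \<Rightarrow> bool" where
  "is_prime_ideal P \<longleftrightarrow> is_ideal P \<and> P \<noteq> UNIV \<and> (\<forall>a b. a * b \<in> P \<longrightarrow> a \<in> P \<or> b \<in> P)"

definition monom :: "('v \<Rightarrow>\<^sub>0 nat) \<Rightarrow> ('v, 'k::field) mpoly" where
  "monom a = Poly_Mapping.single a 1"

definition monomials :: "('v, 'k::field) mpoly set" where
  "monomials = range monom"

definition var :: "'v \<Rightarrow> ('v, 'k::field) mpoly" where
  "var i = monom (Poly_Mapping.single i 1)"

definition squarefree_monomial :: "('v, 'k::field) mpoly \<Rightarrow> bool" where
  "squarefree_monomial u \<longleftrightarrow> (\<exists>a. u = monom a \<and> (\<forall>i. Poly_Mapping.lookup a i \<le> 1))"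

definition monomial_ideal :: "('v, 'k::field) mpoly set \<Rightarrow> bool" where
  "monomial_ideal I \<longleftrightarrow> (\<exists>S \<subseteq> monomials. I = ideal_gen S)"

definition min_gens :: "('v, 'k::field) mpoly set \<Rightarrow> ('v, 'k) mpoly set" where
  "min_gens I = {u \<in> monomials \<inter> I. \<forall>w \<in> monomials \<inter> I. w dvd u \<longrightarrow> w = u}"

definition ideal_del :: "('v, 'k::field) mpoly set \<Rightarrow> 'v \<Rightarrow> ('v, 'k) mpoly set" where
  "ideal_del I i = ideal_gen {u \<in> min_gens I. \<not> var i dvd u}"

definition monomial_prime :: "('v, 'k::field) mpoly set \<Rightarrow> bool" where
  "monomial_prime P \<longleftrightarrow> (\<exists>S. P = ideal_gen (var ` S))"

definition prime_del :: "('v, 'k::field) mpoly set \<Rightarrow> 'v \<Rightarrow> ('v, 'k) mpoly set" where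
  "prime_del P i = ideal_gen (var ` {j. var j \<in> P \<and> j \<noteq> i})"

definition ideal_pow :: "('v, 'k::field) mpoly set \<Rightarrow> nat \<Rightarrow> ('v, 'k) mpoly set" where
  "ideal_pow I s = ideal_gen {prod_list fs | fs. length fs = s \<and> set fs \<subseteq> I}"

text \<open>Ass(R/J): prime ideals of the form (J : f).\<close>
definition Ass :: "('v, 'k::field) mpoly set \<Rightarrow> ('v, 'k) mpoly set set" where
  "Ass J = {P. is_prime_ideal P \<and> (\<exists>f. P = {g. g * f \<in> J})}"

end

theory Submission
  imports Defs
begin



definition dv :: "('v \<Rightarrow>\<^sub>0 nat) \<Rightarrow> ('v \<Rightarrow>\<^sub>0 nat) \<Rightarrow> bool" where
  "dv b a \<longleftrightarrow> (\<exists>c. a = b + c)"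

lemma dv_refl[simp]: "dv a a" unfolding dv_def by (rule exI[of _ 0]) simp
lemma dv_trans: "dv a b \<Longrightarrow> dv b c \<Longrightarrow> dv a c"
  unfolding dv_def by (metis add.assoc)
lemma dv_add_right: "dv b a \<Longrightarrow> dv b (a + x)"
  unfolding dv_def by (metis add.assoc)
lemma dv_add_left: "dv b a \<Longrightarrow> dv b (x + a)"
  unfolding dv_def by (metis add.assoc add.commute)
lemma dv_add_mono: "dv a b \<Longrightarrow> dv c d \<Longrightarrow> dv (a + c) (b + d)"
  unfolding dv_def by (metis add.assoc add.commute)
lemma dv_self_add: "dv a (a + x)" unfolding dv_def by blast
lemma dv_lookup: "dv b a \<Longrightarrow> Poly_Mapping.lookup b i \<le> Poly_Mapping.lookup a i"
  unfolding dv_def by (auto simp: lookup_add)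
lemma dv_single: "dv (Poly_Mapping.single i 1) a \<longleftrightarrow> Poly_Mapping.lookup a i \<ge> 1"
proof
  assume "dv (Poly_Mapping.single i 1) a" then show "Poly_Mapping.lookup a i \<ge> 1"
    using dv_lookup[of _ a i] by fastforce
next
  assume h: "Poly_Mapping.lookup a i \<ge> 1"
  have "a = Poly_Mapping.single i 1 + (a - Poly_Mapping.single i 1)"
    by (rule poly_mapping_eqI) (use h in \<open>auto simp: lookup_add lookup_minus lookup_single when_def\<close>)
  then show "dv (Poly_Mapping.single i 1) a" unfolding dv_def by blast
qed

lemma dv_single_Suc: "dv (Poly_Mapping.single i (Suc 0)) a \<longleftrightarrow> Poly_Mapping.lookup a i \<ge> 1"
  using dv_single[of i a] by simp

lemma monom_mult: "monom a * monom b = (monom (a + b) :: ('v, 'k::field) mpoly)"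
  by (simp add: monom_def mult_single)
lemma keys_monom[simp]: "Poly_Mapping.keys (monom a :: ('v, 'k::field) mpoly) = {a}"
  by (simp add: monom_def)
lemma monom_nz[simp]: "monom a \<noteq> (0 :: ('v, 'k::field) mpoly)"
  using keys_monom[of a] by (metis empty_iff insert_iff keys_zero)
lemma monom_inj: "(monom a :: ('v, 'k::field) mpoly) = monom b \<longleftrightarrow> a = b"
  by (metis keys_monom singleton_inject)

lemma monom_dvd: "(monom b :: ('v, 'k::field) mpoly) dvd monom a \<longleftrightarrow> dv b a"
proof
  assume "monom b dvd (monom a :: ('v, 'k) mpoly)"
  then obtain q where q: "(monom a :: ('v, 'k) mpoly) = monom b * q" by (auto elim: dvdE)
  have "a \<in> Poly_Mapping.keys (monom b * q)" using q by (metis keys_monom singletonI)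
  then show "dv b a" using keys_mult[of "monom b" q] unfolding dv_def by auto
next
  assume "dv b a" then obtain c where "a = b + c" unfolding dv_def by blast
  then have "(monom a :: ('v, 'k) mpoly) = monom b * monom c" by (simp add: monom_mult)
  then show "monom b dvd (monom a :: ('v, 'k) mpoly)" by simp
qed

lemma var_monom: "var i = monom (Poly_Mapping.single i 1)" by (simp add: var_def)

lemma poly_induct[case_names zero add]:
  fixes p :: "('a \<Rightarrow>\<^sub>0 'b::ab_group_add)"
  assumes "Q 0" and "\<And>a c q. c \<noteq> 0 \<Longrightarrow> a \<notin> Poly_Mapping.keys q \<Longrightarrow> Q q \<Longrightarrow> Q (Poly_Mapping.single a c + q)"
  shows "Q p"
proof (induction "card (Poly_Mapping.keys p)" arbitrary: p rule: less_induct)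
  case less
  show ?case
  proof (cases "p = 0")
    case True then show ?thesis using assms(1) by simp
  next
    case False
    then obtain a where a: "a \<in> Poly_Mapping.keys p" by (metis all_not_in_conv keys_eq_empty)
    define q where "q = p - Poly_Mapping.single a (Poly_Mapping.lookup p a)"
    have kq: "Poly_Mapping.keys q = Poly_Mapping.keys p - {a}"
      by (auto simp: q_def in_keys_iff lookup_minus lookup_single when_def split: if_splits)
    have "card (Poly_Mapping.keys q) < card (Poly_Mapping.keys p)" using a kq by (metis card_Diff1_less finite_keys)
    then have "Q q" using less by blast
    moreover have "p = Poly_Mapping.single a (Poly_Mapping.lookup p a) + q" by (simp add: q_def)
    moreover have "Poly_Mapping.lookup p a \<noteq> 0" using a by (simp add: in_keys_iff)
    ultimately show ?thesis using assms(2) kq by (metis DiffD2 singletonI)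
  qed
qed




lemma ig_ideal: "is_ideal (ideal_gen S)"
  unfolding is_ideal_def ideal_gen_def by blast
lemma ig_sub: "S \<subseteq> ideal_gen S"
  unfolding ideal_gen_def by blast
lemma ig_least: "is_ideal J \<Longrightarrow> S \<subseteq> J \<Longrightarrow> ideal_gen S \<subseteq> J"
  unfolding ideal_gen_def by blast
lemma ig_mono: "S \<subseteq> T \<Longrightarrow> ideal_gen S \<subseteq> ideal_gen T"
  by (meson ig_ideal ig_least ig_sub order_trans)

lemma ideal_0: "is_ideal J \<Longrightarrow> 0 \<in> J" by (simp add: is_ideal_def)
lemma ideal_add: "is_ideal J \<Longrightarrow> a \<in> J \<Longrightarrow> b \<in> J \<Longrightarrow> a + b \<in> J" by (simp add: is_ideal_def)
lemma ideal_mult: "is_ideal J \<Longrightarrow> a \<in> J \<Longrightarrow> r * a \<in> J" by (simp add: is_ideal_def)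
lemma ideal_mult2: "is_ideal J \<Longrightarrow> a \<in> J \<Longrightarrow> a * r \<in> J" unfolding is_ideal_def by (metis mult.commute)
lemma ideal_diff: "is_ideal J \<Longrightarrow> a \<in> J \<Longrightarrow> b \<in> J \<Longrightarrow> a - b \<in> J"
proof -
  assume J: "is_ideal J" "a \<in> J" "b \<in> J"
  have "a - b = a + (-1) * b" by simp
  then show ?thesis using J ideal_add ideal_mult by metis
qed
lemma ideal_one: "is_ideal J \<Longrightarrow> 1 \<in> J \<Longrightarrow> J = UNIV"
  using ideal_mult[of J 1] by (metis UNIV_eq_I mult.right_neutral)

lemma colon_ideal: "is_ideal J \<Longrightarrow> is_ideal {g. g * f \<in> J}"
  unfolding is_ideal_def by (simp add: distrib_right mult.assoc)

lemma ideal_sum_terms: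
  fixes p q :: "('v, 'k::field) mpoly"
  assumes J: "is_ideal J" and h: "\<forall>a\<in>Poly_Mapping.keys p. q * monom a \<in> J"
  shows "q * p \<in> J"
  using h
proof (induction p rule: poly_induct)
  case zero then show ?case using J by (simp add: ideal_0)
next
  case (add a c r)
  have ka: "Poly_Mapping.keys (Poly_Mapping.single a c + r) = insert a (Poly_Mapping.keys r)"
    using add.hyps by (auto simp: in_keys_iff lookup_add lookup_single when_def split: if_splits)
  have "q * monom a \<in> J" using add.prems ka by auto
  then have "Poly_Mapping.single 0 c * (q * monom a) \<in> J" using J ideal_mult by blast
  moreover have "Poly_Mapping.single 0 c * (q * monom a) = q * Poly_Mapping.single a c"
    by (simp add: monom_def mult_single algebra_simps)
  moreover have "q * r \<in> J" using add ka by auto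
  ultimately show ?case using J ideal_add by (metis distrib_left)
qed

lemma ideal_terms:
  fixes p :: "('v, 'k::field) mpoly"
  assumes "is_ideal J" "\<forall>a\<in>Poly_Mapping.keys p. monom a \<in> J"
  shows "p \<in> J"
  using ideal_sum_terms[of J p 1] assms by simp

lemma lookup_mult_monom:
  fixes p :: "('v, 'k::field) mpoly"
  shows "Poly_Mapping.lookup (p * monom t) (b + t) = Poly_Mapping.lookup p b"
proof (induction p rule: poly_induct)
  case zero then show ?case by simp
next
  case (add a c q)
  have "(Poly_Mapping.single a c + q) * monom t = Poly_Mapping.single (a + t) c + q * monom t"
    by (simp add: monom_def mult_single distrib_right)
  then show ?case using add by (simp add: lookup_add lookup_single when_def)
qed

lemma keys_mult_monom:
  fixes p :: "('v, 'k::field) mpoly"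
  shows "Poly_Mapping.keys (p * monom t) = (\<lambda>a. a + t) ` Poly_Mapping.keys p"
proof
  show "Poly_Mapping.keys (p * monom t) \<subseteq> (\<lambda>a. a + t) ` Poly_Mapping.keys p"
    using keys_mult[of p "monom t"] by auto
  show "(\<lambda>a. a + t) ` Poly_Mapping.keys p \<subseteq> Poly_Mapping.keys (p * monom t)"
    using lookup_mult_monom[of p t] by (auto simp: in_keys_iff)
qed

definition MI :: "('v \<Rightarrow>\<^sub>0 nat) set \<Rightarrow> ('v, 'k::field) mpoly set" where
  "MI E = {p. \<forall>a\<in>Poly_Mapping.keys p. \<exists>b\<in>E. dv b a}"

lemma MI_ideal: "is_ideal (MI E)"
  unfolding is_ideal_def MI_def
proof (intro conjI ballI allI)
  fix a b :: "('a, 'b) mpoly"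
  assume a: "a \<in> {p. \<forall>a\<in>Poly_Mapping.keys p. \<exists>b\<in>E. dv b a}" and b: "b \<in> {p. \<forall>a\<in>Poly_Mapping.keys p. \<exists>b\<in>E. dv b a}"
  show "a + b \<in> {p. \<forall>a\<in>Poly_Mapping.keys p. \<exists>b\<in>E. dv b a}"
    using a b keys_add[of a b] by auto
next
  fix r a :: "('a, 'b) mpoly"
  assume a: "a \<in> {p. \<forall>a\<in>Poly_Mapping.keys p. \<exists>b\<in>E. dv b a}"
  show "r * a \<in> {p. \<forall>a\<in>Poly_Mapping.keys p. \<exists>b\<in>E. dv b a}"
    using a keys_mult[of r a] by (fastforce intro: dv_add_left)
qed simp

lemma monom_MI: "monom a \<in> MI E \<longleftrightarrow> (\<exists>b\<in>E. dv b a)"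
  by (simp add: MI_def)

lemma MI_iff: "p \<in> MI E \<longleftrightarrow> (\<forall>a\<in>Poly_Mapping.keys p. monom a \<in> MI E)"
  by (simp add: MI_def)

lemma ig_MI: "ideal_gen (monom ` E) = (MI E :: ('v, 'k::field) mpoly set)"
proof
  show "ideal_gen (monom ` E) \<subseteq> (MI E :: ('v, 'k) mpoly set)"
  proof (rule ig_least[OF MI_ideal], rule subsetI)
    fix x :: "('v, 'k) mpoly" assume "x \<in> monom ` E"
    then obtain a where a: "a \<in> E" "x = monom a" by blast
    have "\<exists>b\<in>E. dv b a" using a(1) dv_refl[of a] by blast
    then show "x \<in> MI E" using a(2) by (simp add: monom_MI)
  qed
  show "(MI E :: ('v, 'k) mpoly set) \<subseteq> ideal_gen (monom ` E)"
  proof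
    fix p :: "('v, 'k) mpoly" assume p: "p \<in> MI E"
    have "monom a \<in> ideal_gen (monom ` E)" if ak: "a \<in> Poly_Mapping.keys p" for a
    proof -
      obtain b c where b: "b \<in> E" "a = b + c" using p ak unfolding MI_def dv_def by blast
      have "monom b \<in> ideal_gen (monom ` E)" using b ig_sub by blast
      then have "monom c * monom b \<in> ideal_gen (monom ` E)" using ig_ideal ideal_mult by blast
      then show ?thesis by (simp add: b monom_mult add.commute)
    qed
    then show "p \<in> ideal_gen (monom ` E)" using ideal_terms[OF ig_ideal] by blast
  qed
qed

lemma MI_mult: "p \<in> MI A \<Longrightarrow> q \<in> MI B \<Longrightarrow> p * q \<in> MI {a + b | a b. a \<in> A \<and> b \<in> B}"
  unfolding MI_def using keys_mult[of p q] by (fastforce intro: dv_add_mono)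




definition lsum :: "('v \<Rightarrow>\<^sub>0 nat) set \<Rightarrow> nat \<Rightarrow> ('v \<Rightarrow>\<^sub>0 nat) set" where
  "lsum E n = {sum_list bs | bs. length bs = n \<and> set bs \<subseteq> E}"

lemma monom_0: "monom 0 = (1 :: ('v, 'k::field) mpoly)" by (simp add: monom_def)

lemma MI_mono: "A \<subseteq> B \<Longrightarrow> MI A \<subseteq> MI B" unfolding MI_def by blast

lemma prod_in_MI:
  fixes fs :: "('v, 'k::field) mpoly list"
  shows "set fs \<subseteq> MI E \<Longrightarrow> prod_list fs \<in> MI (lsum E (length fs))"
proof (induction fs)
  case Nil
  have "(0::'v \<Rightarrow>\<^sub>0 nat) \<in> lsum E 0" unfolding lsum_def by force
  then have "monom 0 \<in> (MI (lsum E 0) :: ('v, 'k) mpoly set)" unfolding monom_MI using dv_refl by blast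
  then show ?case by (simp add: monom_0)
next
  case (Cons f fs)
  have h1: "f * prod_list fs \<in> MI {a + b | a b. a \<in> E \<and> b \<in> lsum E (length fs)}"
    using Cons by (intro MI_mult) auto
  have h2: "{a + b | a b. a \<in> E \<and> b \<in> lsum E (length fs)} \<subseteq> lsum E (length (f # fs))"
  proof
    fix x assume "x \<in> {a + b | a b. a \<in> E \<and> b \<in> lsum E (length fs)}"
    then obtain a bs where "x = a + sum_list bs" "a \<in> E" "length bs = length fs" "set bs \<subseteq> E"
      unfolding lsum_def by blast
    then show "x \<in> lsum E (length (f # fs))" unfolding lsum_def
      by (intro CollectI exI[of _ "a # bs"]) auto
  qed
  have "f * prod_list fs \<in> MI (lsum E (length (f # fs)))" by (rule subsetD[OF MI_mono[OF h2] h1])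
  then show ?case by simp
qed

lemma prod_map_monom: "prod_list (map monom bs) = (monom (sum_list bs) :: ('v, 'k::field) mpoly)"
  by (induction bs) (simp_all add: monom_0 monom_mult)

lemma pow_MI: "ideal_pow (MI E) s = (MI (lsum E s) :: ('v, 'k::field) mpoly set)"
proof
  show "ideal_pow (MI E) s \<subseteq> (MI (lsum E s) :: ('v, 'k) mpoly set)"
    unfolding ideal_pow_def
    by (rule ig_least[OF MI_ideal]) (use prod_in_MI in fastforce)
  have "monom ` lsum E s \<subseteq> {prod_list fs | fs. length fs = s \<and> set fs \<subseteq> (MI E :: ('v, 'k) mpoly set)}"
  proof
    fix x :: "('v, 'k) mpoly" assume "x \<in> monom ` lsum E s"
    then obtain bs where bs: "x = monom (sum_list bs)" "length bs = s" "set bs \<subseteq> E"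
      unfolding lsum_def by blast
    have "set (map monom bs) \<subseteq> (MI E :: ('v, 'k) mpoly set)"
    proof
      fix y :: "('v, 'k) mpoly" assume "y \<in> set (map monom bs)"
      then obtain b where b: "b \<in> E" "y = monom b" using bs(3) by auto
      have "monom b \<in> (MI E :: ('v, 'k) mpoly set)" unfolding monom_MI using b(1) dv_refl by blast
      then show "y \<in> MI E" using b by simp
    qed
    then show "x \<in> {prod_list fs | fs. length fs = s \<and> set fs \<subseteq> MI E}"
      using bs by (intro CollectI exI[of _ "map monom bs"]) (simp add: prod_map_monom)
  qed
  then have "ideal_gen (monom ` lsum E s) \<subseteq> ideal_pow (MI E :: ('v, 'k) mpoly set) s"
    unfolding ideal_pow_def by (rule ig_mono)
  then show "(MI (lsum E s) :: ('v, 'k) mpoly set) \<subseteq> ideal_pow (MI E) s" by (simp add: ig_MI)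
qed

lemma pow_mono: "A \<subseteq> B \<Longrightarrow> ideal_pow A s \<subseteq> ideal_pow B s"
  unfolding ideal_pow_def by (rule ig_mono) blast

definition deg :: "('v::finite \<Rightarrow>\<^sub>0 nat) \<Rightarrow> nat" where
  "deg a = (\<Sum>i\<in>UNIV. Poly_Mapping.lookup a i)"

lemma deg_add: "deg (a + b) = deg a + deg b"
  by (simp add: deg_def lookup_add sum.distrib)

lemma deg_pos: "d \<noteq> 0 \<Longrightarrow> deg d > 0"
proof -
  assume "d \<noteq> 0"
  then obtain i where "Poly_Mapping.lookup d i \<noteq> 0" by (metis poly_mapping_eqI lookup_zero)
  then show ?thesis unfolding deg_def
    by (metis (mono_tags) finite_UNIV gr0I sum_eq_0_iff UNIV_I)
qed

lemma min_exists:
  fixes I :: "('v::finite, 'k::field) mpoly set"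
  shows "monom b \<in> I \<Longrightarrow> \<exists>w. monom w \<in> min_gens I \<and> dv w b"
proof (induction "deg b" arbitrary: b rule: less_induct)
  case less
  show ?case
  proof (cases "monom b \<in> min_gens I")
    case True then show ?thesis using dv_refl by blast
  next
    case False
    have "monom b \<in> monomials \<inter> I" using less.prems by (simp add: monomials_def)
    then obtain w' where w': "w' \<in> monomials \<inter> I" "w' dvd monom b" "w' \<noteq> monom b"
      using False unfolding min_gens_def by blast
    then obtain c where c: "w' = monom c" by (auto simp: monomials_def)
    have "dv c b" using w' c monom_dvd by blast
    then obtain d where d: "b = c + d" unfolding dv_def by blast
    have "d \<noteq> 0" using d w'(3) c by auto
    then have "deg c < deg b" using d deg_add deg_pos by (metis less_add_same_cancel1)
    moreover have "monom c \<in> I" using w' c by simp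
    ultimately obtain w where "monom w \<in> min_gens I" "dv w c" using less by blast
    then show ?thesis using \<open>dv c b\<close> dv_trans by blast
  qed
qed

lemma min_gens_monom: "u \<in> min_gens I \<Longrightarrow> \<exists>a. u = monom a"
  unfolding min_gens_def monomials_def by blast

lemma min_gens_sub: "min_gens I \<subseteq> I" unfolding min_gens_def by blast

lemma del_MI:
  fixes I :: "('v, 'k::field) mpoly set"
  shows "ideal_del I i = MI {a. monom a \<in> min_gens I \<and> Poly_Mapping.lookup a i = 0}"
proof -
  have "{u \<in> min_gens I. \<not> var i dvd u} = monom ` {a. monom a \<in> min_gens I \<and> Poly_Mapping.lookup a i = 0}"
  proof
    show "{u \<in> min_gens I. \<not> var i dvd u} \<subseteq> monom ` {a. monom a \<in> min_gens I \<and> Poly_Mapping.lookup a i = 0}"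
    proof
      fix u assume u: "u \<in> {u \<in> min_gens I. \<not> var i dvd u}"
      then obtain a where a: "u = monom a" using min_gens_monom by blast
      then have "Poly_Mapping.lookup a i = 0" using u by (auto simp: var_monom monom_dvd dv_single_Suc)
      then show "u \<in> monom ` {a. monom a \<in> min_gens I \<and> Poly_Mapping.lookup a i = 0}" using u a by auto
    qed
    show "monom ` {a. monom a \<in> min_gens I \<and> Poly_Mapping.lookup a i = 0} \<subseteq> {u \<in> min_gens I. \<not> var i dvd u}"
      by (auto simp: var_monom monom_dvd dv_single_Suc)
  qed
  then show ?thesis unfolding ideal_del_def by (simp add: ig_MI)
qed




lemma emb_exists: "\<exists>\<iota>::'v::finite \<Rightarrow> nat. inj \<iota>"
  using finite_imp_inj_to_nat_seg[of "UNIV :: 'v set"] by auto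

definition emb :: "('v \<Rightarrow> nat) \<Rightarrow> ('v::finite \<Rightarrow>\<^sub>0 nat) \<Rightarrow> (nat \<Rightarrow>\<^sub>0 nat)" where
  "emb \<iota> e = (\<Sum>v\<in>UNIV. Poly_Mapping.single (\<iota> v) (Poly_Mapping.lookup e v))"

lemma emb_lookup: "inj \<iota> \<Longrightarrow> Poly_Mapping.lookup (emb \<iota> e) (\<iota> w) = Poly_Mapping.lookup e w"
proof -
  assume inj: "inj \<iota>"
  have "Poly_Mapping.lookup (emb \<iota> e) (\<iota> w) = (\<Sum>v\<in>UNIV. if v = w then Poly_Mapping.lookup e v else 0)"
    unfolding emb_def lookup_sum
    by (rule sum.cong) (auto simp: lookup_single when_def inj_eq[OF inj])
  also have "\<dots> = Poly_Mapping.lookup e w" by simp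
  finally show ?thesis .
qed

lemma emb_add: "emb \<iota> (a + b) = emb \<iota> a + emb \<iota> b"
  unfolding emb_def by (simp add: lookup_add single_add sum.distrib)

lemma emb_inj: "inj \<iota> \<Longrightarrow> emb \<iota> a = emb \<iota> b \<Longrightarrow> a = b"
  by (rule poly_mapping_eqI) (metis emb_lookup)

lemma max_key:
  fixes f :: "('v::finite, 'k::field) mpoly"
  assumes "f \<noteq> 0" "inj \<iota>"
  shows "\<exists>a0\<in>Poly_Mapping.keys f. \<forall>a\<in>Poly_Mapping.keys f. a \<noteq> a0 \<longrightarrow> emb \<iota> a < emb \<iota> a0"
proof -
  have ne: "emb \<iota> ` Poly_Mapping.keys f \<noteq> {}" using assms(1) by simp
  have fin: "finite (emb \<iota> ` Poly_Mapping.keys f)" by simp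
  obtain a0 where a0: "a0 \<in> Poly_Mapping.keys f" "emb \<iota> a0 = Max (emb \<iota> ` Poly_Mapping.keys f)"
    using Max_in[OF fin ne] by auto
  show ?thesis
  proof (intro bexI[OF _ a0(1)] ballI impI)
    fix a assume "a \<in> Poly_Mapping.keys f" "a \<noteq> a0"
    then have "emb \<iota> a \<le> emb \<iota> a0" "emb \<iota> a \<noteq> emb \<iota> a0"
      using a0 fin emb_inj[OF assms(2)] by auto
    then show "emb \<iota> a < emb \<iota> a0" by simp
  qed
qed

lemma no_zd:
  fixes f g :: "('v::finite, 'k::field) mpoly"
  assumes "f \<noteq> 0" "g \<noteq> 0"
  shows "f * g \<noteq> 0"
proof -
  obtain \<iota> :: "'v \<Rightarrow> nat" where inj: "inj \<iota>" using emb_exists by blast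
  obtain a0 where a0: "a0 \<in> Poly_Mapping.keys f" "\<forall>a\<in>Poly_Mapping.keys f. a \<noteq> a0 \<longrightarrow> emb \<iota> a < emb \<iota> a0"
    using max_key[OF assms(1) inj] by blast
  obtain b0 where b0: "b0 \<in> Poly_Mapping.keys g" "\<forall>a\<in>Poly_Mapping.keys g. a \<noteq> b0 \<longrightarrow> emb \<iota> a < emb \<iota> b0"
    using max_key[OF assms(2) inj] by blast
  define cf where "cf = Poly_Mapping.lookup f a0"
  define cg where "cg = Poly_Mapping.lookup g b0"
  define f' where "f' = f - Poly_Mapping.single a0 cf"
  define g' where "g' = g - Poly_Mapping.single b0 cg"
  have kf: "Poly_Mapping.keys f' = Poly_Mapping.keys f - {a0}"
    by (auto simp: f'_def cf_def in_keys_iff lookup_minus lookup_single when_def split: if_splits)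
  have kg: "Poly_Mapping.keys g' = Poly_Mapping.keys g - {b0}"
    by (auto simp: g'_def cg_def in_keys_iff lookup_minus lookup_single when_def split: if_splits)
  have cf0: "cf \<noteq> 0" using a0(1) by (simp add: cf_def in_keys_iff)
  have cg0: "cg \<noteq> 0" using b0(1) by (simp add: cg_def in_keys_iff)
  have fg: "f * g = Poly_Mapping.single (a0 + b0) (cf * cg) + (Poly_Mapping.single a0 cf * g' + (f' * Poly_Mapping.single b0 cg + f' * g'))"
  proof -
    have "f = Poly_Mapping.single a0 cf + f'" "g = Poly_Mapping.single b0 cg + g'"
      by (simp_all add: f'_def g'_def)
    then show ?thesis by (simp add: algebra_simps mult_single)
  qed
  have lt: "emb \<iota> (x + y) < emb \<iota> (a0 + b0)"
    if "x \<in> Poly_Mapping.keys f" "y \<in> Poly_Mapping.keys g" "x \<noteq> a0 \<or> y \<noteq> b0" for x y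
  proof -
    have "emb \<iota> x \<le> emb \<iota> a0" "emb \<iota> y \<le> emb \<iota> b0" using that a0 b0 by force+
    moreover have "emb \<iota> x < emb \<iota> a0 \<or> emb \<iota> y < emb \<iota> b0" using that a0 b0 by blast
    ultimately have "emb \<iota> x + emb \<iota> y < emb \<iota> a0 + emb \<iota> b0"
      by (meson add_less_le_mono add_le_less_mono)
    then show ?thesis by (simp add: emb_add)
  qed
  have nk: "a0 + b0 \<notin> Poly_Mapping.keys p"
    if "Poly_Mapping.keys p \<subseteq> {x + y | x y. x \<in> Poly_Mapping.keys f \<and> y \<in> Poly_Mapping.keys g \<and> (x \<noteq> a0 \<or> y \<noteq> b0)}"
    for p :: "('v, 'k) mpoly"
    using that lt by fastforce
  define S where "S = {x + y | x y. x \<in> Poly_Mapping.keys f \<and> y \<in> Poly_Mapping.keys g \<and> (x \<noteq> a0 \<or> y \<noteq> b0)}"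
  have nk': "Poly_Mapping.lookup p (a0 + b0) = 0" if "Poly_Mapping.keys p \<subseteq> S" for p :: "('v, 'k) mpoly"
    using nk[of p] that unfolding S_def by (simp add: in_keys_iff)
  have k1: "Poly_Mapping.lookup (Poly_Mapping.single a0 cf * g') (a0 + b0) = 0"
  proof (rule nk', rule subsetI)
    fix x assume "x \<in> Poly_Mapping.keys (Poly_Mapping.single a0 cf * g')"
    then obtain b where "x = a0 + b" "b \<in> Poly_Mapping.keys g'" using keys_mult[of "Poly_Mapping.single a0 cf" g'] cf0 by auto
    then show "x \<in> S" unfolding S_def using kg a0(1) by blast
  qed
  have k2: "Poly_Mapping.lookup (f' * Poly_Mapping.single b0 cg) (a0 + b0) = 0"
  proof (rule nk', rule subsetI)
    fix x assume "x \<in> Poly_Mapping.keys (f' * Poly_Mapping.single b0 cg)"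
    then obtain b where "x = b + b0" "b \<in> Poly_Mapping.keys f'" using keys_mult[of f' "Poly_Mapping.single b0 cg"] cg0 by auto
    then show "x \<in> S" unfolding S_def using kf b0(1) by blast
  qed
  have k3: "Poly_Mapping.lookup (f' * g') (a0 + b0) = 0"
  proof (rule nk', rule subsetI)
    fix x assume "x \<in> Poly_Mapping.keys (f' * g')"
    then obtain a b where "x = a + b" "a \<in> Poly_Mapping.keys f'" "b \<in> Poly_Mapping.keys g'" using keys_mult[of f' g'] by auto
    then show "x \<in> S" unfolding S_def using kf kg by blast
  qed
  have "Poly_Mapping.lookup (f * g) (a0 + b0) = cf * cg"
    unfolding fg by (simp add: lookup_add k1 k2 k3)
  then show ?thesis using cf0 cg0 by auto
qed




definition PV :: "'v set \<Rightarrow> ('v, 'k::field) mpoly set" where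
  "PV W = MI ((\<lambda>j. Poly_Mapping.single j 1) ` W)"

lemma monom_PV: "monom a \<in> PV W \<longleftrightarrow> (\<exists>j\<in>W. Poly_Mapping.lookup a j \<ge> 1)"
  unfolding PV_def monom_MI by (simp add: dv_single_Suc)

lemma PV_iff: "p \<in> PV W \<longleftrightarrow> (\<forall>a\<in>Poly_Mapping.keys p. \<exists>j\<in>W. Poly_Mapping.lookup a j \<ge> 1)"
  unfolding PV_def MI_def by (simp add: dv_single_Suc)

lemma PV_gen: "ideal_gen (var ` W) = (PV W :: ('v, 'k::field) mpoly set)"
proof -
  have "var ` W = monom ` ((\<lambda>j. Poly_Mapping.single j 1) ` W)" by (auto simp: var_monom)
  then show ?thesis unfolding PV_def by (metis ig_MI)
qed

definition filt :: "(('v \<Rightarrow>\<^sub>0 nat) \<Rightarrow> bool) \<Rightarrow> ('v, 'k::field) mpoly \<Rightarrow> ('v, 'k) mpoly" where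
  "filt Q p = Abs_poly_mapping (\<lambda>e. if Q e then Poly_Mapping.lookup p e else 0)"

lemma lookup_filt: "Poly_Mapping.lookup (filt Q p) e = (if Q e then Poly_Mapping.lookup p e else 0)"
proof -
  have "finite {e. (if Q e then Poly_Mapping.lookup p e else 0) \<noteq> 0}"
    by (rule finite_subset[OF _ finite_lookup[of p]]) auto
  then show ?thesis unfolding filt_def by simp
qed

lemma PV_prime:
  fixes W :: "'v::finite set"
  shows "is_prime_ideal (PV W :: ('v, 'k::field) mpoly set)"
  unfolding is_prime_ideal_def
proof (intro conjI allI impI)
  show "is_ideal (PV W :: ('v, 'k) mpoly set)" unfolding PV_def by (rule MI_ideal)
  have "monom 0 \<notin> (PV W :: ('v, 'k) mpoly set)" by (simp add: monom_PV)
  then show "(PV W :: ('v, 'k) mpoly set) \<noteq> UNIV" by blast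
next
  fix a b :: "('v, 'k) mpoly"
  assume ab: "a * b \<in> PV W"
  define free where "free e \<longleftrightarrow> (\<forall>j\<in>W. Poly_Mapping.lookup e j = 0)" for e :: "'v \<Rightarrow>\<^sub>0 nat"
  have idl: "is_ideal (PV W :: ('v, 'k) mpoly set)" unfolding PV_def by (rule MI_ideal)
  show "a \<in> PV W \<or> b \<in> PV W"
  proof (rule ccontr)
    assume "\<not> (a \<in> PV W \<or> b \<in> PV W)"
    then have na: "a \<notin> PV W" and nb: "b \<notin> PV W" by auto
    define fa where "fa = filt free a"
    define fb where "fb = filt free b"
    have split: "x - filt free x \<in> PV W" for x :: "('v, 'k) mpoly"
      unfolding PV_iff
      by (auto simp: in_keys_iff lookup_minus lookup_filt free_def Suc_le_eq split: if_splits)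
    have nz: "filt free x \<noteq> 0" if xn: "x \<notin> PV W" for x :: "('v, 'k) mpoly"
    proof -
      obtain e where e: "e \<in> Poly_Mapping.keys x" "\<forall>j\<in>W. \<not> Poly_Mapping.lookup e j \<ge> 1"
        using xn unfolding PV_iff by blast
      then have "Poly_Mapping.lookup (filt free x) e \<noteq> 0"
        by (auto simp: lookup_filt free_def in_keys_iff)
      then show ?thesis by auto
    qed
    have kfree: "free e" if "e \<in> Poly_Mapping.keys (filt free x)" for e x
      using that by (auto simp: in_keys_iff lookup_filt split: if_splits)
    have prod_nz: "fa * fb \<noteq> 0" unfolding fa_def fb_def by (rule no_zd[OF nz[OF na] nz[OF nb]])
    then obtain k where k: "k \<in> Poly_Mapping.keys (fa * fb)" by (metis keys_eq_empty ex_in_conv)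
    then obtain x y where xy: "k = x + y" "x \<in> Poly_Mapping.keys fa" "y \<in> Poly_Mapping.keys fb"
      using keys_mult[of fa fb] by blast
    have "free x" "free y" using xy kfree unfolding fa_def fb_def by blast+
    then have "free k" using xy(1) by (simp add: free_def lookup_add)
    then have "\<not> (\<exists>j\<in>W. Poly_Mapping.lookup k j \<ge> 1)" unfolding free_def by auto
    then have "fa * fb \<notin> PV W" using k unfolding PV_iff by blast
    moreover have "fa * fb \<in> PV W"
    proof -
      have e1: "a - fa \<in> PV W" "b - fb \<in> PV W" using split fa_def fb_def by auto
      have "fa * fb = a * b - ((a - fa) * b + fa * (b - fb))" by (simp add: algebra_simps)
      moreover have "(a - fa) * b + fa * (b - fb) \<in> PV W"
        using e1 idl ideal_add ideal_mult ideal_mult2 by blast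
      ultimately show ?thesis using ab idl ideal_diff by metis
    qed
    ultimately show False by blast
  qed
qed




lemma dv_iff_le: "dv b a \<longleftrightarrow> (\<forall>j. Poly_Mapping.lookup b j \<le> Poly_Mapping.lookup a j)"
proof
  assume h: "dv b a" show "\<forall>j. Poly_Mapping.lookup b j \<le> Poly_Mapping.lookup a j" using dv_lookup[OF h] by blast
next
  assume h: "\<forall>j. Poly_Mapping.lookup b j \<le> Poly_Mapping.lookup a j"
  have "a = b + (a - b)"
    by (rule poly_mapping_eqI) (use h in \<open>simp add: lookup_add lookup_minus\<close>)
  then show "dv b a" unfolding dv_def by blast
qed

lemma dv_sum_list: "b \<in> set bs \<Longrightarrow> dv b (sum_list bs)"
  by (induction bs) (auto intro: dv_add_left dv_self_add)

lemma lookup_sum_list_0: "(\<forall>w\<in>set ws. Poly_Mapping.lookup w i = 0) \<Longrightarrow> Poly_Mapping.lookup (sum_list ws) i = 0"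
  by (induction ws) (auto simp: lookup_add)

lemma list_choose:
  "(\<forall>b\<in>set bs. \<exists>w. Q w \<and> dv w b) \<Longrightarrow> \<exists>ws. length ws = length bs \<and> (\<forall>w\<in>set ws. Q w) \<and> dv (sum_list ws) (sum_list bs)"
proof (induction bs)
  case Nil then show ?case by (intro exI[of _ "[]"]) simp
next
  case (Cons b bs)
  then obtain ws where ws: "length ws = length bs" "\<forall>w\<in>set ws. Q w" "dv (sum_list ws) (sum_list bs)" by auto
  obtain w where w: "Q w" "dv w b" using Cons.prems by auto
  show ?case using ws w by (intro exI[of _ "w # ws"]) (auto intro: dv_add_mono)
qed

definition zi :: "'v \<Rightarrow> ('v \<Rightarrow>\<^sub>0 nat) \<Rightarrow> ('v \<Rightarrow>\<^sub>0 nat)" where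
  "zi i x = x - Poly_Mapping.single i (Poly_Mapping.lookup x i)"

lemma lookup_zi: "Poly_Mapping.lookup (zi i x) j = (if j = i then 0 else Poly_Mapping.lookup x j)"
  by (simp add: zi_def lookup_minus lookup_single when_def)

lemma prime_prod_notin:
  fixes P :: "('v, 'k::field) mpoly set"
  assumes "is_prime_ideal P" "finite A" "\<forall>t\<in>A. h t \<notin> P"
  shows "prod h A \<notin> P"
  using assms(2,3)
proof (induction A rule: finite_induct)
  case empty
  have "1 \<notin> P" using assms(1) ideal_one unfolding is_prime_ideal_def by blast
  then show ?case by simp
next
  case (insert x F)
  then show ?case using assms(1) unfolding is_prime_ideal_def by auto
qed




theorem proposition2p2:
  fixes I P :: "('v::finite, 'k::field) mpoly set"
    and v :: "('v, 'k) mpoly"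
    and l s :: nat
  assumes "monomial_ideal I"
    and "l > 0"
    and "squarefree_monomial v"
    and "v \<in> ideal_pow I l"
    and "monomial_prime P"
    and "s > 0"
    and "\<forall>i. var i dvd v \<longrightarrow> prime_del P i \<notin> Ass (ideal_pow (ideal_del I i) s)"
    and "P \<in> Ass (ideal_pow I s)"
  shows "s > l"
proof (rule ccontr)
  assume "\<not> s > l"
  then have sl: "s \<le> l" by simp
  obtain S where S: "S \<subseteq> monomials" "I = ideal_gen S" using assms(1) unfolding monomial_ideal_def by blast
  define E where "E = {a. monom a \<in> S}"
  have SE: "S = monom ` E" using S(1) unfolding E_def monomials_def by auto
  have IE: "I = MI E" using S(2) SE ig_MI by metis
  define J where "J = ideal_pow I s"
  have JE: "J = MI (lsum E s)" unfolding J_def IE by (rule pow_MI)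
  have Jid: "is_ideal J" unfolding JE by (rule MI_ideal)
  have monJ: "monom x \<in> J \<longleftrightarrow> (\<exists>e\<in>lsum E s. dv e x)" for x unfolding JE by (rule monom_MI)
  have polJ: "p \<in> J \<longleftrightarrow> (\<forall>a\<in>Poly_Mapping.keys p. monom a \<in> J)" for p unfolding JE by (rule MI_iff)
  obtain V where PV: "P = PV V" using assms(5) PV_gen unfolding monomial_prime_def by metis
  obtain f where Pprime: "is_prime_ideal P" and Pf: "P = {g. g * f \<in> J}"
    using assms(8) unfolding Ass_def J_def by blast
  obtain ve where ve: "v = monom ve" "\<forall>i. Poly_Mapping.lookup ve i \<le> 1"
    using assms(3) unfolding squarefree_monomial_def by blast
  have vJ: "\<exists>e\<in>lsum E s. dv e ve"
  proof -
    have "v \<in> (MI (lsum E l) :: ('v, 'k) mpoly set)" using assms(4) unfolding IE pow_MI .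
    then obtain bs where bs: "length bs = l" "set bs \<subseteq> E" "dv (sum_list bs) ve"
      unfolding ve(1) monom_MI lsum_def by blast
    have "sum_list bs = sum_list (take s bs) + sum_list (drop s bs)"
      using sum_list_append[of "take s bs" "drop s bs"] by simp
    then have "dv (sum_list (take s bs)) (sum_list bs)" using dv_self_add by metis
    then have "dv (sum_list (take s bs)) ve" using bs(3) by (rule dv_trans)
    moreover have "sum_list (take s bs) \<in> lsum E s" unfolding lsum_def using bs sl
      by (intro CollectI exI[of _ "take s bs"]) (auto dest: in_set_takeD)
    ultimately show ?thesis by blast
  qed
  define Q where "Q t = {g. g * monom t \<in> J}" for t
  have Qid: "is_ideal (Q t)" for t unfolding Q_def by (rule colon_ideal[OF Jid])
  have PQ: "P \<subseteq> Q t" if "t \<in> Poly_Mapping.keys f" for t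
  proof -
    have "var j \<in> Q t" if j: "j \<in> V" for j
    proof -
      have "var j \<in> P" unfolding PV PV_gen[symmetric] using j ig_sub by blast
      then have "f * monom (Poly_Mapping.single j 1) \<in> J" using Pf by (simp add: var_monom mult.commute)
      moreover have "t + Poly_Mapping.single j 1 \<in> Poly_Mapping.keys (f * monom (Poly_Mapping.single j 1))"
        using \<open>t \<in> Poly_Mapping.keys f\<close> by (simp add: keys_mult_monom)
      ultimately have "monom (t + Poly_Mapping.single j 1) \<in> J" using polJ by blast
      then show ?thesis unfolding Q_def by (simp add: var_monom monom_mult add.commute)
    qed
    then have "ideal_gen (var ` V) \<subseteq> Q t" by (intro ig_least[OF Qid]) blast
    then show ?thesis using PV PV_gen[where 'k='k, of V] by simp
  qed
  have "\<exists>t\<in>Poly_Mapping.keys f. Q t \<subseteq> P"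
  proof (rule ccontr)
    assume "\<not> (\<exists>t\<in>Poly_Mapping.keys f. Q t \<subseteq> P)"
    then have "\<forall>t\<in>Poly_Mapping.keys f. \<exists>g. g \<in> Q t \<and> g \<notin> P" by blast
    from bchoice[OF this] obtain gg where gg: "\<forall>t\<in>Poly_Mapping.keys f. gg t \<in> Q t \<and> gg t \<notin> P" by blast
    define G where "G = prod gg (Poly_Mapping.keys f)"
    have "G \<notin> P" unfolding G_def by (rule prime_prod_notin[OF Pprime finite_keys]) (use gg in blast)
    moreover have "G * monom t \<in> J" if t: "t \<in> Poly_Mapping.keys f" for t
    proof -
      have "G = gg t * prod gg (Poly_Mapping.keys f - {t})" unfolding G_def using t
        by (simp add: prod.remove)
      then have e: "G * monom t = prod gg (Poly_Mapping.keys f - {t}) * (gg t * monom t)"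
        by (simp add: algebra_simps)
      have "gg t * monom t \<in> J" using gg t unfolding Q_def by blast
      then show ?thesis unfolding e by (rule ideal_mult[OF Jid])
    qed
    then have "G * f \<in> J" using ideal_sum_terms[OF Jid] by blast
    then have "G \<in> P" using Pf by blast
    ultimately show False by blast
  qed
  then obtain t0 where t0: "t0 \<in> Poly_Mapping.keys f" "Q t0 \<subseteq> P" by blast
  have Pt0: "P = Q t0" using PQ[OF t0(1)] t0(2) by blast
  have monP: "monom y \<in> P \<longleftrightarrow> monom (y + t0) \<in> J" for y
    unfolding Pt0 Q_def by (simp add: monom_mult)
  have monPV: "monom y \<in> P \<longleftrightarrow> (\<exists>j\<in>V. Poly_Mapping.lookup y j \<ge> 1)" for y
    unfolding PV by (rule monom_PV)
  have t0J: "monom t0 \<notin> J"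
  proof
    assume "monom t0 \<in> J"
    then have "1 \<in> P" unfolding Pt0 Q_def by simp
    then have "P = UNIV" using Pprime ideal_one unfolding is_prime_ideal_def by blast
    then show False using Pprime unfolding is_prime_ideal_def by blast
  qed
  obtain i where i: "Poly_Mapping.lookup ve i \<ge> 1" "Poly_Mapping.lookup t0 i = 0"
  proof (rule ccontr)
    assume "\<not> thesis"
    then have "\<forall>i. Poly_Mapping.lookup ve i \<ge> 1 \<longrightarrow> Poly_Mapping.lookup t0 i \<noteq> 0" using that by blast
    then have "\<forall>i. Poly_Mapping.lookup ve i \<le> Poly_Mapping.lookup t0 i" using ve(2)
      by (metis le_antisym less_one not_le_imp_less zero_le)
    then have "dv ve t0" by (simp add: dv_iff_le)
    then have "monom t0 \<in> J" using vJ monJ dv_trans by blast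
    then show False using t0J by blast
  qed
  have "var i dvd v" unfolding ve(1) var_monom monom_dvd dv_single using i(1) .
  then have notAss: "prime_del P i \<notin> Ass (ideal_pow (ideal_del I i) s)" using assms(7) by blast
  define Ei where "Ei = {a. monom a \<in> min_gens I \<and> Poly_Mapping.lookup a i = 0}"
  define Ji where "Ji = ideal_pow (ideal_del I i) s"
  have JiE: "Ji = MI (lsum Ei s)" unfolding Ji_def del_MI Ei_def by (rule pow_MI)
  have monJi: "monom x \<in> Ji \<longleftrightarrow> (\<exists>e\<in>lsum Ei s. dv e x)" for x unfolding JiE by (rule monom_MI)
  have polJi: "p \<in> Ji \<longleftrightarrow> (\<forall>a\<in>Poly_Mapping.keys p. monom a \<in> Ji)" for p unfolding JiE by (rule MI_iff)
  have delsub: "ideal_del I i \<subseteq> I" unfolding ideal_del_def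
    using ig_least[of I] S(2) ig_ideal min_gens_sub by (metis (no_types, lifting) mem_Collect_eq subset_iff)
  have JiJ: "Ji \<subseteq> J" unfolding Ji_def J_def by (rule pow_mono[OF delsub])
  have lsumEi: "Poly_Mapping.lookup e i = 0" if "e \<in> lsum Ei s" for e
    using that unfolding lsum_def Ei_def by (auto intro!: lookup_sum_list_0)
  have F2: "monom x \<in> Ji" if h1: "monom x \<in> J" and h2: "Poly_Mapping.lookup x i = 0" for x
  proof -
    obtain bs where bs: "length bs = s" "set bs \<subseteq> E" "dv (sum_list bs) x"
      using h1 unfolding monJ lsum_def by blast
    have "\<exists>w. w \<in> Ei \<and> dv w b" if b: "b \<in> set bs" for b
    proof -
      have "monom b \<in> I" unfolding IE monom_MI using b bs(2) dv_refl by blast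
      then obtain w where w: "monom w \<in> min_gens I" "dv w b" using min_exists by blast
      have "dv w x" using w(2) dv_sum_list[OF b] bs(3) dv_trans by blast
      then have "Poly_Mapping.lookup w i = 0" using dv_lookup[of w x i] h2 by simp
      then show ?thesis using w unfolding Ei_def by blast
    qed
    then obtain ws where ws: "length ws = length bs" "\<forall>w\<in>set ws. w \<in> Ei" "dv (sum_list ws) (sum_list bs)"
      using list_choose[of bs "\<lambda>w. w \<in> Ei"] by blast
    have "sum_list ws \<in> lsum Ei s" unfolding lsum_def using ws bs by blast
    moreover have "dv (sum_list ws) x" using ws(3) bs(3) dv_trans by blast
    ultimately show ?thesis unfolding monJi by blast
  qed
  have F3: "monom (zi i x) \<in> Ji" if h: "monom x \<in> Ji" for x
  proof -
    obtain e where e: "e \<in> lsum Ei s" "dv e x" using h unfolding monJi by blast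
    have "dv e (zi i x)" using e lsumEi[OF e(1)] unfolding dv_iff_le by (simp add: lookup_zi)
    then show ?thesis unfolding monJi using e(1) by blast
  qed
  define W where "W = V - {i}"
  have varP: "var j \<in> P \<longleftrightarrow> j \<in> V" for j
    unfolding var_monom monPV by (simp add: lookup_single when_def)
  have pdel: "prime_del P i = PV W"
  proof -
    have "{j. var j \<in> P \<and> j \<noteq> i} = W" unfolding W_def using varP by blast
    then show ?thesis unfolding prime_del_def using PV_gen by metis
  qed
  have key: "(\<exists>e\<in>lsum Ei s. dv e (a + t0)) \<longleftrightarrow> (\<exists>j\<in>W. Poly_Mapping.lookup a j \<ge> 1)" for a
  proof
    assume "\<exists>e\<in>lsum Ei s. dv e (a + t0)"
    then have "monom (a + t0) \<in> Ji" unfolding monJi .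
    then have "monom (zi i (a + t0)) \<in> Ji" by (rule F3)
    moreover have "zi i (a + t0) = zi i a + t0"
      by (rule poly_mapping_eqI) (simp add: lookup_zi lookup_add i(2))
    ultimately have "monom (zi i a + t0) \<in> J" using JiJ by auto
    then have "monom (zi i a) \<in> P" using monP by blast
    then obtain j where "j \<in> V" "Poly_Mapping.lookup (zi i a) j \<ge> 1" using monPV by blast
    then show "\<exists>j\<in>W. Poly_Mapping.lookup a j \<ge> 1" unfolding W_def
      by (auto simp: lookup_zi split: if_splits)
  next
    assume "\<exists>j\<in>W. Poly_Mapping.lookup a j \<ge> 1"
    then obtain j where j: "j \<in> V" "j \<noteq> i" "Poly_Mapping.lookup a j \<ge> 1" unfolding W_def by blast
    then have "monom (zi i a) \<in> P" unfolding monPV by (intro bexI[of _ j]) (auto simp: lookup_zi)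
    then have "monom (zi i a + t0) \<in> J" using monP by blast
    moreover have "Poly_Mapping.lookup (zi i a + t0) i = 0" by (simp add: lookup_add lookup_zi i(2))
    ultimately have "monom (zi i a + t0) \<in> Ji" using F2 by blast
    then obtain e where e: "e \<in> lsum Ei s" "dv e (zi i a + t0)" unfolding monJi by blast
    have "dv (zi i a + t0) (a + t0)" unfolding dv_iff_le by (simp add: lookup_add lookup_zi)
    then show "\<exists>e\<in>lsum Ei s. dv e (a + t0)" using e dv_trans by blast
  qed
  have colon: "PV W = {g. g * monom t0 \<in> Ji}"
  proof (rule set_eqI)
    fix g :: "('v, 'k) mpoly"
    have "g * monom t0 \<in> Ji \<longleftrightarrow> (\<forall>a\<in>Poly_Mapping.keys g. \<exists>e\<in>lsum Ei s. dv e (a + t0))"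
      unfolding polJi[of "g * monom t0"] keys_mult_monom monJi by blast
    also have "\<dots> \<longleftrightarrow> g \<in> PV W" unfolding PV_iff key ..
    finally show "g \<in> PV W \<longleftrightarrow> g \<in> {g. g * monom t0 \<in> Ji}" by simp
  qed
  have "prime_del P i \<in> Ass Ji"
    unfolding Ass_def pdel using PV_prime colon by blast
  then show False using notAss unfolding Ji_def by blast
qed


end
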